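(* In the standing setting (assuming (MP)), the Bellman bid never exceeds the straightforward bid: $\beta^v(0,k)\le\sigma^v(0)$ for all $k\in\{0,\dots,m\}$, and for every $t\in\{1,\dots,\overline R-1\}$, $k\in\{0,\dots,m\}$, $\delta\in\{0,\dots,N\}$, $$\beta^v(t,k,\delta)\le\sigma^v(t).$$
   Context: Standing setting. Integers $n\ge2$, $m\ge1$; $N:=(n-1)m$. Reals $p_{\mathrm{init}}\ge0$, $\Delta P>0$; the price at round $t\ge0$ is $p_t:=p_{\mathrm{init}}+t\Delta P$. The player's valuation $v:\{0,\dots,m\}\to[0,\infty)$ satisfies $v(0)=0$ and is non-decreasing and concave. $\overline R:=\lceil (v(1)-p_{\mathrm{init}})/\Delta P\rceil$, assumed $\ge1$. For $t\ge0$, $\sigma^v(t):=\min\operatorname{argmax}_{0\le u\le m}(v(u)-up_t)$. The opponent is given by random variables $Z_1\ge Z_2\ge\dots\ge Z_N\ge0$ (a.s.) on a probability space $(\Omega,\mathcal F,\mathbb P)$; its demand at price $p$ is $\delta(p):=\sum_{j=1}^N\mathbf 1\{Z_j>p\}$. For $t\ge1$ fix transition kernels $K_t(\delta'\mid\delta)$ ($\delta,\delta'\in\{0,\dots,N\}$), each $K_t(\cdot\mid\delta)$ a probability on $\{0,\dots,\delta\}$, with $K_t(\delta'\mid\delta)=\mathbb P(\delta(p_t)=\delta'\mid\delta(p_{t-1})=\delta)$ whenever $\mathbb P(\delta(p_{t-1})=\delta)>0$. Value function: for $t\in\{1,\dots,\overline R\}$, $k\in\{0,\dots,m\}$, $\delta\in\{0,\dots,N\}$: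 $\varphi^v(t,k,\delta):=v(k)-kp_{t-1}$ if $k+\delta\le m$; $:=\max_{0\le u\le k}\sum_{\delta'=0}^N K_t(\delta'\mid\delta)\varphi^v(t+1,u,\delta')$ if $k+\delta>m$ and $t<\overline R$; $:=0$ if $k+\delta>m$ and $t=\overline R$. Also $\varphi^v(0,k):=\max_{0\le u\le k}\sum_{\delta'}\mathbb P(\delta(p_0)=\delta')\varphi^v(1,u,\delta')$. Bellman strategy: $\beta^v(0,k):=\min\operatorname{argmax}_{0\le u\le k}\sum_{\delta'}\mathbb P(\delta(p_0)=\delta')\varphi^v(1,u,\delta')$, and for $t\in\{1,\dots,\overline R-1\}$, $\beta^v(t,k,\delta):=\min\operatorname{argmax}_{0\le u\le k}\sum_{\delta'}K_t(\delta'\mid\delta)\varphi^v(t+1,u,\delta')$. Markov property (MP): $(\delta(p_t))_{0\le t\le\overline R}$ is a Markov chain. *)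

theory Defs
  imports "HOL-Probability.Probability"
begin

definition price :: "real \<Rightarrow> real \<Rightarrow> nat \<Rightarrow> real" where
  "price pinit dP t = pinit + real t * dP"

definition min_argmax :: "(nat \<Rightarrow> real) \<Rightarrow> nat set \<Rightarrow> nat" where
  "min_argmax f A = Min {u \<in> A. \<forall>w\<in>A. f w \<le> f u}"

definition sigma :: "(nat \<Rightarrow> real) \<Rightarrow> nat \<Rightarrow> real \<Rightarrow> real \<Rightarrow> nat \<Rightarrow> nat" where
  "sigma v m pinit dP t = min_argmax (\<lambda>u. v u - real u * price pinit dP t) {0..m}"

definition Rbar :: "(nat \<Rightarrow> real) \<Rightarrow> real \<Rightarrow> real \<Rightarrow> nat" where
  "Rbar v pinit dP = nat \<lceil>(v 1 - pinit) / dP\<rceil>"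

definition demand :: "(nat \<Rightarrow> 'a \<Rightarrow> real) \<Rightarrow> nat \<Rightarrow> real \<Rightarrow> 'a \<Rightarrow> nat" where
  "demand Z N p \<omega> = (\<Sum>j=1..N. if Z j \<omega> > p then 1 else 0)"

text \<open>Auxiliary value function by number s of remaining rounds:
  phi_aux s t k d with s = Rbar - t.\<close>
fun phi_aux :: "(nat \<Rightarrow> real) \<Rightarrow> nat \<Rightarrow> nat \<Rightarrow> real \<Rightarrow> real \<Rightarrow>
    (nat \<Rightarrow> nat \<Rightarrow> nat \<Rightarrow> real) \<Rightarrow> nat \<Rightarrow> nat \<Rightarrow> nat \<Rightarrow> nat \<Rightarrow> real" where
  "phi_aux v m N pinit dP K 0 t k d =
     (if k + d \<le> m then v k - real k * price pinit dP (t - 1) else 0)"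
| "phi_aux v m N pinit dP K (Suc s) t k d =
     (if k + d \<le> m then v k - real k * price pinit dP (t - 1)
      else Max ((\<lambda>u. \<Sum>d'=0..N. K t d d' * phi_aux v m N pinit dP K s (t+1) u d') ` {0..k}))"

text \<open>Value function phi^v(t,k,delta) for t in {1..Rbar}; K t d d' = K_t(d' | d).\<close>
definition phi :: "(nat \<Rightarrow> real) \<Rightarrow> nat \<Rightarrow> nat \<Rightarrow> real \<Rightarrow> real \<Rightarrow>
    (nat \<Rightarrow> nat \<Rightarrow> nat \<Rightarrow> real) \<Rightarrow> nat \<Rightarrow> nat \<Rightarrow> nat \<Rightarrow> real" where
  "phi v m N pinit dP K t k d = phi_aux v m N pinit dP K (Rbar v pinit dP - t) t k d"

definition beta :: "(nat \<Rightarrow> real) \<Rightarrow> nat \<Rightarrow> nat \<Rightarrow> real \<Rightarrow> real \<Rightarrow>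
    (nat \<Rightarrow> nat \<Rightarrow> nat \<Rightarrow> real) \<Rightarrow> nat \<Rightarrow> nat \<Rightarrow> nat \<Rightarrow> nat" where
  "beta v m N pinit dP K t k d =
     min_argmax (\<lambda>u. \<Sum>d'=0..N. K t d d' * phi v m N pinit dP K (t+1) u d') {0..k}"

definition beta0 :: "'a measure \<Rightarrow> (nat \<Rightarrow> 'a \<Rightarrow> real) \<Rightarrow> (nat \<Rightarrow> real) \<Rightarrow> nat \<Rightarrow> nat \<Rightarrow> real \<Rightarrow> real \<Rightarrow>
    (nat \<Rightarrow> nat \<Rightarrow> nat \<Rightarrow> real) \<Rightarrow> nat \<Rightarrow> nat" where
  "beta0 M Z v m N pinit dP K k =
     min_argmax (\<lambda>u. \<Sum>d'=0..N.
        measure M {\<omega> \<in> space M. demand Z N (price pinit dP 0) \<omega> = d'} * phi v m N pinit dP K 1 u d')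
       {0..k}"

text \<open>Markov property of the discrete process X_0,...,X_R (values in nat):
  for all t in 1..R and all histories x, P(X_0=x_0,...,X_t=x_t) P(X_{t-1}=x_{t-1})
  = P(X_0=x_0,...,X_{t-1}=x_{t-1}) P(X_{t-1}=x_{t-1}, X_t=x_t),
  i.e. P(X_t = x_t | X_0..X_{t-1}) = P(X_t = x_t | X_{t-1}) whenever defined.\<close>
definition markov_upto :: "'a measure \<Rightarrow> (nat \<Rightarrow> 'a \<Rightarrow> nat) \<Rightarrow> nat \<Rightarrow> bool" where
  "markov_upto M X R \<longleftrightarrow>
    (\<forall>t\<in>{1..R}. \<forall>x::nat \<Rightarrow> nat.
       measure M {\<omega> \<in> space M. \<forall>i\<le>t. X i \<omega> = x i} * measure M {\<omega> \<in> space M. X (t-1) \<omega> = x (t-1)}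
     = measure M {\<omega> \<in> space M. \<forall>i\<le>t-1. X i \<omega> = x i} *
       measure M {\<omega> \<in> space M. X (t-1) \<omega> = x (t-1) \<and> X t \<omega> = x t})"

end

theory Submission
  imports Defs
begin

lemma min_argmax_props:
  assumes "finite A" "A \<noteq> {}"
  shows "min_argmax f A \<in> A \<and> (\<forall>w\<in>A. f w \<le> f (min_argmax f A))"
proof -
  let ?S = "{u \<in> A. \<forall>w\<in>A. f w \<le> f u}"
  have "Max (f ` A) \<in> f ` A" using assms by (intro Max_in) auto
  then obtain x where x: "x \<in> A" "f x = Max (f ` A)" by auto
  have "x \<in> ?S" using x assms by auto
  then have "?S \<noteq> {}" by blast
  moreover have "finite ?S" using assms by auto
  ultimately have "Min ?S \<in> ?S" by (rule Min_in[rotated])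
  then show ?thesis unfolding min_argmax_def by auto
qed

lemma min_argmax_le:
  assumes "finite A" "u \<in> A" "\<forall>w\<in>A. f w \<le> f u"
  shows "min_argmax f A \<le> u"
  unfolding min_argmax_def using assms by (intro Min_le) auto

lemma sigma_props:
  "sigma v m pinit dP t \<le> m \<and> (\<forall>w\<le>m. v w - real w * price pinit dP t
      \<le> v (sigma v m pinit dP t) - real (sigma v m pinit dP t) * price pinit dP t)"
  using min_argmax_props[of "{0..m}" "\<lambda>u. v u - real u * price pinit dP t"]
  unfolding sigma_def by auto

lemma sigma_mono:
  assumes "dP > 0" "t \<le> t'"
  shows "sigma v m pinit dP t' \<le> sigma v m pinit dP t"
proof (rule ccontr)
  assume a: "\<not> ?thesis"
  let ?s = "sigma v m pinit dP t" and ?s' = "sigma v m pinit dP t'"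
  let ?p = "price pinit dP t" and ?p' = "price pinit dP t'"
  have "t \<noteq> t'" using a by auto
  with assms have pp: "?p < ?p'" unfolding price_def by auto
  have h1: "v ?s - real ?s * ?p' \<le> v ?s' - real ?s' * ?p'"
    using sigma_props[of v m pinit dP t'] sigma_props[of v m pinit dP t] by auto
  have h2: "v ?s' - real ?s' * ?p \<le> v ?s - real ?s * ?p"
    using sigma_props[of v m pinit dP t'] sigma_props[of v m pinit dP t] by auto
  have "(real ?s' - real ?s) * (?p' - ?p) > 0" using a pp by (intro mult_pos_pos) auto
  then show False using h1 h2 by (simp add: algebra_simps)
qed

lemma phi_bound:
  assumes v0: "v 0 = 0" and dP: "dP > 0"
    and Kpos: "\<And>t d d'. 1 \<le> t \<Longrightarrow> d \<le> N \<Longrightarrow> K t d d' \<ge> 0"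
    and Ksum: "\<And>t d. 1 \<le> t \<Longrightarrow> d \<le> N \<Longrightarrow> (\<Sum>d'=0..N. K t d d') = 1"
  shows "1 \<le> t \<Longrightarrow> k \<le> m \<Longrightarrow> d \<le> N \<Longrightarrow>
    (\<forall>w\<le>m. v w - real w * price pinit dP (t-1) \<le> B) \<Longrightarrow> phi_aux v m N pinit dP K s t k d \<le> B"
proof (induction s arbitrary: t k d)
  case 0
  have "v 0 - real 0 * price pinit dP (t-1) \<le> B" using 0 by blast
  then show ?case using 0 v0 by auto
next
  case (Suc s)
  have B0: "0 \<le> B" using Suc.prems(4)[rule_format, of 0] v0 by auto
  show ?case
  proof (cases "k + d \<le> m")
    case True then show ?thesis using Suc.prems by auto
  next
    case False
    have pm: "price pinit dP (t-1) \<le> price pinit dP t" using dP unfolding price_def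
      by (simp add: mult_right_mono)
    have hb: "\<forall>w\<le>m. v w - real w * price pinit dP (t+1-1) \<le> B"
    proof (intro allI impI)
      fix w assume w: "w \<le> m"
      have "real w * price pinit dP (t-1) \<le> real w * price pinit dP t"
        using pm by (intro mult_left_mono) auto
      then show "v w - real w * price pinit dP (t+1-1) \<le> B" using Suc.prems(4) w by force
    qed
    have "\<forall>x \<in> (\<lambda>u. \<Sum>d'=0..N. K t d d' * phi_aux v m N pinit dP K s (t+1) u d') ` {0..k}. x \<le> B"
    proof
      fix x assume "x \<in> (\<lambda>u. \<Sum>d'=0..N. K t d d' * phi_aux v m N pinit dP K s (t+1) u d') ` {0..k}"
      then obtain u where u: "u \<le> k" "x = (\<Sum>d'=0..N. K t d d' * phi_aux v m N pinit dP K s (t+1) u d')"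
        by auto
      have "x \<le> (\<Sum>d'=0..N. K t d d' * B)" unfolding u(2)
      proof (rule sum_mono)
        fix d' assume "d' \<in> {0..N}"
        then have "phi_aux v m N pinit dP K s (t+1) u d' \<le> B"
          using Suc.IH[of "t+1" u d'] hb u Suc.prems by auto
        then show "K t d d' * phi_aux v m N pinit dP K s (t+1) u d' \<le> K t d d' * B"
          using Kpos[of t d d'] Suc.prems by (intro mult_left_mono) auto
      qed
      also have "\<dots> = B" using Ksum[of t d] Suc.prems by (simp add: sum_distrib_right[symmetric])
      finally show "x \<le> B" .
    qed
    then show ?thesis using False by (simp add: Max_le_iff)
  qed
qed

lemma phi_main:
  assumes v0: "v 0 = 0" and dP: "dP > 0"
    and Kpos: "\<And>t d d'. 1 \<le> t \<Longrightarrow> d \<le> N \<Longrightarrow> K t d d' \<ge> 0"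
    and Ksum: "\<And>t d. 1 \<le> t \<Longrightarrow> d \<le> N \<Longrightarrow> (\<Sum>d'=0..N. K t d d') = 1"
  shows "1 \<le> t \<Longrightarrow> u \<le> m \<Longrightarrow> d \<le> N \<Longrightarrow> sigma v m pinit dP (t-1) \<le> u \<Longrightarrow>
    phi_aux v m N pinit dP K s t u d \<le> phi_aux v m N pinit dP K s t (sigma v m pinit dP (t-1)) d"
proof (induction s arbitrary: t u d)
  case 0
  let ?s = "sigma v m pinit dP (t-1)"
  have sp: "?s \<le> m" "v u - real u * price pinit dP (t-1) \<le> v ?s - real ?s * price pinit dP (t-1)"
    using sigma_props[of v m pinit dP "t-1"] 0 by auto
  have "0 \<le> v ?s - real ?s * price pinit dP (t-1)"
    using sigma_props[of v m pinit dP "t-1"] v0 by force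
  then show ?case using sp 0 by auto
next
  case (Suc s)
  let ?s = "sigma v m pinit dP (t-1)"
  let ?V = "v ?s - real ?s * price pinit dP (t-1)"
  have sp: "?s \<le> m" "\<forall>w\<le>m. v w - real w * price pinit dP (t-1) \<le> ?V"
    using sigma_props[of v m pinit dP "t-1"] by auto
  let ?G = "\<lambda>u. \<Sum>d'=0..N. K t d d' * phi_aux v m N pinit dP K s (t+1) u d'"
  show ?case
  proof (cases "u + d \<le> m")
    case True
    then show ?thesis using Suc.prems sp by auto
  next
    case F1: False
    show ?thesis
    proof (cases "?s + d \<le> m")
      case True
      have "phi_aux v m N pinit dP K (Suc s) t u d \<le> ?V"
        using phi_bound[where v=v and dP=dP and K=K and N=N and m=m and pinit=pinit, OF v0 dP Kpos Ksum, of t u d] Suc.prems sp by blast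
      then show ?thesis using True by simp
    next
      case F2: False
      let ?s1 = "sigma v m pinit dP t"
      have s1: "?s1 \<le> ?s" using sigma_mono[OF dP, of "t-1" t] by auto
      have "Max (?G ` {0..u}) \<le> Max (?G ` {0..?s})"
      proof (subst Max_le_iff, simp, simp, intro ballI)
        fix x assume "x \<in> ?G ` {0..u}"
        then obtain w where w: "w \<le> u" "x = ?G w" by auto
        show "x \<le> Max (?G ` {0..?s})"
        proof (cases "w \<le> ?s")
          case True then show ?thesis using w by (intro Max_ge) auto
        next
          case False
          have "?G w \<le> ?G ?s1"
          proof (rule sum_mono)
            fix d' assume "d' \<in> {0..N}"
            then have "phi_aux v m N pinit dP K s (t+1) w d' \<le> phi_aux v m N pinit dP K s (t+1) ?s1 d'"
              using Suc.IH[of "t+1" w d'] w Suc.prems s1 False by auto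
            then show "K t d d' * phi_aux v m N pinit dP K s (t+1) w d' \<le> K t d d' * phi_aux v m N pinit dP K s (t+1) ?s1 d'"
              using Kpos[of t d d'] Suc.prems by (intro mult_left_mono) auto
          qed
          also have "\<dots> \<le> Max (?G ` {0..?s})" using s1 by (intro Max_ge) auto
          finally show ?thesis using w by simp
        qed
      qed
      then show ?thesis using F1 F2 by simp
    qed
  qed
qed

lemma min_argmax_bound:
  assumes "\<And>w. w \<le> k \<Longrightarrow> s < w \<Longrightarrow> f w \<le> f s"
  shows "min_argmax f {0..k} \<le> s"
proof (cases "k \<le> s")
  case True
  then show ?thesis using min_argmax_props[of "{0..k}" f] by auto
next
  case False
  obtain w0 where w0: "w0 \<le> k" "\<forall>w\<in>{0..k}. f w \<le> f w0"
    using min_argmax_props[of "{0..k}" f] by auto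
  show ?thesis
  proof (cases "w0 \<le> s")
    case True
    then show ?thesis using min_argmax_le[of "{0..k}" w0 f] w0 by auto
  next
    case F: False
    have "\<forall>w\<in>{0..k}. f w \<le> f s" using w0 assms[of w0] F by force
    then show ?thesis using min_argmax_le[of "{0..k}" s f] False by auto
  qed
qed

theorem mainTheorem8:
  fixes M :: "'a measure" and Z :: "nat \<Rightarrow> 'a \<Rightarrow> real"
    and n m :: nat and pinit dP :: real and v :: "nat \<Rightarrow> real"
    and K :: "nat \<Rightarrow> nat \<Rightarrow> nat \<Rightarrow> real"
  assumes "prob_space M"
    and "n \<ge> 2" and "m \<ge> 1"
    and "pinit \<ge> 0" and "dP > 0"
    and "v 0 = 0"
    and "\<And>u. u \<le> m \<Longrightarrow> v u \<ge> 0"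
    and "\<And>u. u < m \<Longrightarrow> v u \<le> v (Suc u)"
    and "\<And>u. 1 \<le> u \<Longrightarrow> u < m \<Longrightarrow> v (Suc u) - v u \<le> v u - v (u - 1)"
    and "\<lceil>(v 1 - pinit) / dP\<rceil> \<ge> 1"
    and "\<And>j. j \<in> {1..(n-1)*m} \<Longrightarrow> Z j \<in> borel_measurable M"
    and "AE \<omega> in M. (\<forall>j. 1 \<le> j \<and> j < (n-1)*m \<longrightarrow> Z (Suc j) \<omega> \<le> Z j \<omega>)
                     \<and> (\<forall>j\<in>{1..(n-1)*m}. Z j \<omega> \<ge> 0)"
    and "\<And>t d d'. 1 \<le> t \<Longrightarrow> d \<le> (n-1)*m \<Longrightarrow> K t d d' \<ge> 0"
    and "\<And>t d d'. 1 \<le> t \<Longrightarrow> d \<le> (n-1)*m \<Longrightarrow> d < d' \<Longrightarrow> K t d d' = 0"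
    and "\<And>t d. 1 \<le> t \<Longrightarrow> d \<le> (n-1)*m \<Longrightarrow> (\<Sum>d'=0..d. K t d d') = 1"
    and "\<And>t d d'. 1 \<le> t \<Longrightarrow> d \<le> (n-1)*m \<Longrightarrow> d' \<le> (n-1)*m \<Longrightarrow>
           measure M {\<omega> \<in> space M. demand Z ((n-1)*m) (price pinit dP (t-1)) \<omega> = d} > 0 \<Longrightarrow>
           K t d d' =
             measure M {\<omega> \<in> space M. demand Z ((n-1)*m) (price pinit dP (t-1)) \<omega> = d
                                   \<and> demand Z ((n-1)*m) (price pinit dP t) \<omega> = d'}
             / measure M {\<omega> \<in> space M. demand Z ((n-1)*m) (price pinit dP (t-1)) \<omega> = d}"
    and "markov_upto M (\<lambda>t. demand Z ((n-1)*m) (price pinit dP t)) (Rbar v pinit dP)"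
  shows "(\<forall>k\<le>m. beta0 M Z v m ((n-1)*m) pinit dP K k \<le> sigma v m pinit dP 0)
       \<and> (\<forall>t\<in>{1..Rbar v pinit dP - 1}. \<forall>k\<le>m. \<forall>d\<le>(n-1)*m.
            beta v m ((n-1)*m) pinit dP K t k d \<le> sigma v m pinit dP t)"
proof -
  let ?N = "(n-1)*m"
  note Kpos = assms(13)
  have Ksum: "\<And>(t::nat) (d::nat). 1 \<le> t \<Longrightarrow> d \<le> ?N \<Longrightarrow> (\<Sum>d'=0..?N. K t d d') = 1"
  proof -
    fix t d :: nat assume a: "1 \<le> t" "d \<le> ?N"
    have "(\<Sum>d'=0..?N. K t d d') = (\<Sum>d'=0..d. K t d d')"
      using a assms(14)[of t d] by (intro sum.mono_neutral_right) auto
    then show "(\<Sum>d'=0..?N. K t d d') = 1" using assms(15) a by simp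
  qed
  note PM = phi_main[where v=v and dP=dP and K=K and N="?N" and m=m and pinit=pinit, OF assms(6) assms(5) Kpos Ksum]
  show ?thesis
  proof (intro conjI allI impI ballI)
    fix k assume "k \<le> m"
    show "beta0 M Z v m ?N pinit dP K k \<le> sigma v m pinit dP 0"
      unfolding beta0_def phi_def
    proof (rule min_argmax_bound, rule sum_mono)
      fix w d' assume w: "w \<le> k" "sigma v m pinit dP 0 < w" and d': "d' \<in> {0..?N}"
      have "phi_aux v m ?N pinit dP K (Rbar v pinit dP - 1) 1 w d'
          \<le> phi_aux v m ?N pinit dP K (Rbar v pinit dP - 1) 1 (sigma v m pinit dP 0) d'"
        using PM[of 1 w d'] w d' \<open>k \<le> m\<close> by auto
      then show "measure M {\<omega> \<in> space M. demand Z ?N (price pinit dP 0) \<omega> = d'} * phi_aux v m ?N pinit dP K (Rbar v pinit dP - 1) 1 w d'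
         \<le> measure M {\<omega> \<in> space M. demand Z ?N (price pinit dP 0) \<omega> = d'} * phi_aux v m ?N pinit dP K (Rbar v pinit dP - 1) 1 (sigma v m pinit dP 0) d'"
        by (intro mult_left_mono) auto
    qed
  next
    fix t k d assume t: "t \<in> {1..Rbar v pinit dP - 1}" and k: "k \<le> m" and d: "d \<le> ?N"
    show "beta v m ?N pinit dP K t k d \<le> sigma v m pinit dP t"
      unfolding beta_def phi_def
    proof (rule min_argmax_bound, rule sum_mono)
      fix w d' assume w: "w \<le> k" "sigma v m pinit dP t < w" and d': "d' \<in> {0..?N}"
      have "phi_aux v m ?N pinit dP K (Rbar v pinit dP - (t+1)) (t+1) w d'
          \<le> phi_aux v m ?N pinit dP K (Rbar v pinit dP - (t+1)) (t+1) (sigma v m pinit dP t) d'"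
        using PM[of "t+1" w d'] w d' k by auto
      then show "K t d d' * phi_aux v m ?N pinit dP K (Rbar v pinit dP - (t+1)) (t+1) w d'
         \<le> K t d d' * phi_aux v m ?N pinit dP K (Rbar v pinit dP - (t+1)) (t+1) (sigma v m pinit dP t) d'"
        using Kpos[of t d d'] t d by (intro mult_left_mono) auto
    qed
  qed
qed

end
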